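(* Assume (A2) and a congestion game payoff structure with continuously differentiable, nonincreasing resource rewards $w_r$. Then the set of mixed stationary Nash equilibria of the mean field game is compact and convex. If moreover every $w_r$ is strictly decreasing, the equilibrium resource flows $\sigma_r$, $r\in\mathcal R$, are the same at every mixed stationary Nash equilibrium.
   Context: Model: classes $c\in[C]$ with masses $m^c>0$, finite state sets $\mathcal S^c$, nonempty finite admissible action sets $\mathcal A^c(s)$, transition kernels $\phi^c(\cdot\mid s,a)$. $\mathcal U^c_D$ = deterministic policies (maps $s\mapsto u(s)\in\mathcal A^c(s)$). $\phi^{c,u}_{ss'}=\phi^c(s\mid s',u(s'))$. (A2): for all $c,u\in\mathcal U^c_D$, $\phi^{c,u}$ has exactly one recurrent communicating class; $\eta^{c,u}$ is the unique stationary distribution of the continuous-time chain with generator $\lambda(\phi^{c,u}-I)$. Congestion game payoff structure: common action rate $\lambda>0$; finite resource set $\mathcal R$; each action is a subset of $\mathcal R$; $w_r:\mathbb R_{\ge0}\to\mathbb R$; for a state-action distribution $\nu$ the flow is $\sigma_r=\lambda\sum_c\sum_s\sum_{a\ni r}\nu^c[s,a]$ and $r^c(s,a,\nu)=\sum_{r\in a}w_r(\sigma_r)$. State-policy distributions: $X=\prod_c\{\mu^c\in\mathbb R_{\ge0}^{\mathcal S^c\times\mathcal U^c_D}:\sum\mu^c=m^c\}$; $\mu^c_{\mathcal S\times\mathcal A}[s,a]=\sum_u\mu^c[s,u]\mathbf 1[u(s)=a]$; $\mu^c[\mathcal S^c,u]=\sum_s\mu^c[s,u]$; $F^c_u(\mu)=\sum_s\eta^{c,u}(s)r^c(s,u(s),\mu_{\mathcal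 S\times\mathcal A})$. MSNE: $\mu\in X$ such that for all $c,u$: (i) $\mu^c[\mathcal S^c,u]>0\Rightarrow F^c_u(\mu)\ge F^c_v(\mu)\ \forall v\in\mathcal U^c_D$; (ii) $\mu^c[s,u]=\eta^{c,u}(s)\mu^c[\mathcal S^c,u]$ for all $s$. The flows at an MSNE $\mu$ are $\sigma_r$ computed from $\mu_{\mathcal S\times\mathcal A}$. *)

theory Defs
  imports "HOL-Analysis.Analysis"
begin

(* Conventions:
   'c  : finite type of classes,  'r : finite type of resources (the resource set R = UNIV),
   'st : finite ambient type of states; class c has state set S c,
   actions are subsets of R:  A c s :: 'r set set  (admissible actions at state s),
   phi c s a s' = probability of moving from s to s' in class c under action a,
   i.e. phi^c(s' | s, a). *)

text \<open>Deterministic policies of one class: maps on the state set into admissible actions,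
  extended by the default value {} outside the state set (canonical representative).\<close>
definition policies :: "'st set \<Rightarrow> ('st \<Rightarrow> 'r set set) \<Rightarrow> ('st \<Rightarrow> 'r set) set" where
  "policies S A = {u. (\<forall>s\<in>S. u s \<in> A s) \<and> (\<forall>s. s \<notin> S \<longrightarrow> u s = {})}"

definition policy_kernel :: "('st \<Rightarrow> 'a \<Rightarrow> 'st \<Rightarrow> real) \<Rightarrow> ('st \<Rightarrow> 'a) \<Rightarrow> 'st \<Rightarrow> 'st \<Rightarrow> real" where
  "policy_kernel phic u = (\<lambda>s s'. phic s (u s) s')"

definition reach :: "'st set \<Rightarrow> ('st \<Rightarrow> 'st \<Rightarrow> real) \<Rightarrow> ('st \<times> 'st) set" where
  "reach S P = {(s, t). s \<in> S \<and> t \<in> S \<and> P s t > 0}\<^sup>*"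

definition communicating_class :: "'st set \<Rightarrow> ('st \<Rightarrow> 'st \<Rightarrow> real) \<Rightarrow> 'st set \<Rightarrow> bool" where
  "communicating_class S P C \<longleftrightarrow>
     (\<exists>s\<in>S. C = {t\<in>S. (s, t) \<in> reach S P \<and> (t, s) \<in> reach S P})"

definition closed_class :: "'st set \<Rightarrow> ('st \<Rightarrow> 'st \<Rightarrow> real) \<Rightarrow> 'st set \<Rightarrow> bool" where
  "closed_class S P C \<longleftrightarrow> (\<forall>x\<in>C. \<forall>y\<in>S. P x y > 0 \<longrightarrow> y \<in> C)"

text \<open>For a finite chain, a communicating class is recurrent iff it is closed.\<close>
definition recurrent_class :: "'st set \<Rightarrow> ('st \<Rightarrow> 'st \<Rightarrow> real) \<Rightarrow> 'st set \<Rightarrow> bool" where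
  "recurrent_class S P C \<longleftrightarrow> communicating_class S P C \<and> closed_class S P C"

definition one_recurrent_class :: "'st set \<Rightarrow> ('st \<Rightarrow> 'st \<Rightarrow> real) \<Rightarrow> bool" where
  "one_recurrent_class S P \<longleftrightarrow> (\<exists>!C. recurrent_class S P C)"

text \<open>Stationary distribution of the continuous-time chain with generator lam (P - I).\<close>
definition ctmc_stationary :: "real \<Rightarrow> 'st set \<Rightarrow> ('st \<Rightarrow> 'st \<Rightarrow> real) \<Rightarrow> ('st \<Rightarrow> real) \<Rightarrow> bool" where
  "ctmc_stationary lam S P \<eta> \<longleftrightarrow>
     (\<forall>s. s \<notin> S \<longrightarrow> \<eta> s = 0) \<and> (\<forall>s\<in>S. \<eta> s \<ge> 0) \<and> sum \<eta> S = 1 \<and>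
     (\<forall>t\<in>S. (\<Sum>s\<in>S. \<eta> s * (lam * (P s t - (if s = t then 1 else 0)))) = 0)"

definition stat_dist :: "real \<Rightarrow> 'st set \<Rightarrow> ('st \<Rightarrow> 'st \<Rightarrow> real) \<Rightarrow> 'st \<Rightarrow> real" where
  "stat_dist lam S P = (THE \<eta>. ctmc_stationary lam S P \<eta>)"

text \<open>State-policy distributions live in real^('c \<times> 'st \<times> policy); coordinates that are not
  (class, state, admissible policy) triples are forced to be 0.\<close>
definition valid_idx :: "('c \<Rightarrow> 'st set) \<Rightarrow> ('c \<Rightarrow> 'st \<Rightarrow> 'r set set)
    \<Rightarrow> 'c \<times> 'st \<times> ('st \<Rightarrow> 'r set) \<Rightarrow> bool" where
  "valid_idx S A i = (case i of (c, s, u) \<Rightarrow> s \<in> S c \<and> u \<in> policies (S c) (A c))"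

definition state_policy_dists :: "('c::finite \<Rightarrow> 'st::finite set) \<Rightarrow> ('c \<Rightarrow> 'st \<Rightarrow> 'r::finite set set)
    \<Rightarrow> ('c \<Rightarrow> real) \<Rightarrow> (real ^ ('c \<times> 'st \<times> ('st \<Rightarrow> 'r set))) set" where
  "state_policy_dists S A m = {\<mu>.
     (\<forall>i. \<not> valid_idx S A i \<longrightarrow> \<mu> $ i = 0) \<and>
     (\<forall>i. valid_idx S A i \<longrightarrow> \<mu> $ i \<ge> 0) \<and>
     (\<forall>c. (\<Sum>s\<in>S c. \<Sum>u\<in>policies (S c) (A c). \<mu> $ (c, s, u)) = m c)}"

definition sa_dist :: "('c::finite \<Rightarrow> 'st::finite set) \<Rightarrow> ('c \<Rightarrow> 'st \<Rightarrow> 'r::finite set set)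
    \<Rightarrow> real ^ ('c \<times> 'st \<times> ('st \<Rightarrow> 'r set)) \<Rightarrow> 'c \<Rightarrow> 'st \<Rightarrow> 'r set \<Rightarrow> real" where
  "sa_dist S A \<mu> c s a = (\<Sum>u\<in>policies (S c) (A c). if u s = a then \<mu> $ (c, s, u) else 0)"

definition flow :: "real \<Rightarrow> ('c::finite \<Rightarrow> 'st set) \<Rightarrow> ('c \<Rightarrow> 'st \<Rightarrow> 'r set set)
    \<Rightarrow> ('c \<Rightarrow> 'st \<Rightarrow> 'r set \<Rightarrow> real) \<Rightarrow> 'r \<Rightarrow> real" where
  "flow lam S A \<nu> r = lam * (\<Sum>c\<in>UNIV. \<Sum>s\<in>S c. \<Sum>a\<in>{a\<in>A c s. r \<in> a}. \<nu> c s a)"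

definition cg_reward :: "real \<Rightarrow> ('c::finite \<Rightarrow> 'st set) \<Rightarrow> ('c \<Rightarrow> 'st \<Rightarrow> 'r::finite set set)
    \<Rightarrow> ('r \<Rightarrow> real \<Rightarrow> real) \<Rightarrow> ('c \<Rightarrow> 'st \<Rightarrow> 'r set \<Rightarrow> real) \<Rightarrow> 'r set \<Rightarrow> real" where
  "cg_reward lam S A w \<nu> a = (\<Sum>r\<in>a. w r (flow lam S A \<nu> r))"

definition Fval :: "real \<Rightarrow> ('c::finite \<Rightarrow> 'st::finite set) \<Rightarrow> ('c \<Rightarrow> 'st \<Rightarrow> 'r::finite set set)
    \<Rightarrow> ('c \<Rightarrow> 'st \<Rightarrow> 'r set \<Rightarrow> 'st \<Rightarrow> real) \<Rightarrow> ('r \<Rightarrow> real \<Rightarrow> real)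
    \<Rightarrow> real ^ ('c \<times> 'st \<times> ('st \<Rightarrow> 'r set)) \<Rightarrow> 'c \<Rightarrow> ('st \<Rightarrow> 'r set) \<Rightarrow> real" where
  "Fval lam S A \<phi> w \<mu> c u =
     (\<Sum>s\<in>S c. stat_dist lam (S c) (policy_kernel (\<phi> c) u) s * cg_reward lam S A w (sa_dist S A \<mu>) (u s))"

definition policy_mass :: "('c::finite \<Rightarrow> 'st::finite set)
    \<Rightarrow> real ^ ('c \<times> 'st \<times> ('st \<Rightarrow> 'r::finite set)) \<Rightarrow> 'c \<Rightarrow> ('st \<Rightarrow> 'r set) \<Rightarrow> real" where
  "policy_mass S \<mu> c u = (\<Sum>s\<in>S c. \<mu> $ (c, s, u))"

definition MSNE :: "real \<Rightarrow> ('c::finite \<Rightarrow> 'st::finite set) \<Rightarrow> ('c \<Rightarrow> 'st \<Rightarrow> 'r::finite set set)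
    \<Rightarrow> ('c \<Rightarrow> 'st \<Rightarrow> 'r set \<Rightarrow> 'st \<Rightarrow> real) \<Rightarrow> ('c \<Rightarrow> real) \<Rightarrow> ('r \<Rightarrow> real \<Rightarrow> real)
    \<Rightarrow> real ^ ('c \<times> 'st \<times> ('st \<Rightarrow> 'r set)) \<Rightarrow> bool" where
  "MSNE lam S A \<phi> m w \<mu> \<longleftrightarrow> \<mu> \<in> state_policy_dists S A m \<and>
     (\<forall>c. \<forall>u\<in>policies (S c) (A c).
        (policy_mass S \<mu> c u > 0 \<longrightarrow>
           (\<forall>v\<in>policies (S c) (A c). Fval lam S A \<phi> w \<mu> c u \<ge> Fval lam S A \<phi> w \<mu> c v)) \<and>
        (\<forall>s\<in>S c. \<mu> $ (c, s, u) =
           stat_dist lam (S c) (policy_kernel (\<phi> c) u) s * policy_mass S \<mu> c u))"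

end

theory Submission
  imports Defs
begin

definition fl :: "real \<Rightarrow> ('c::finite \<Rightarrow> 'st::finite set) \<Rightarrow> ('c \<Rightarrow> 'st \<Rightarrow> 'r::finite set set)
    \<Rightarrow> real ^ ('c \<times> 'st \<times> ('st \<Rightarrow> 'r set)) \<Rightarrow> 'r \<Rightarrow> real" where
  "fl lam S A \<mu> r = lam * (\<Sum>c\<in>UNIV. \<Sum>s\<in>S c. \<Sum>u\<in>policies (S c) (A c).
      (if r \<in> u s then 1 else 0) * \<mu> $ (c, s, u))"

lemma flow_eq: "flow lam S A (sa_dist S A \<mu>) r = fl lam S A \<mu> r"
proof -
  have "(\<Sum>a\<in>{a\<in>A c s. r\<in>a}. \<Sum>u\<in>policies (S c) (A c). if u s = a then \<mu>$(c,s,u) else 0)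
      = (\<Sum>u\<in>policies (S c) (A c). (if r\<in>u s then 1 else 0) * \<mu>$(c,s,u))" if "s\<in>S c" for c s
  proof -
    have "(\<Sum>a\<in>{a\<in>A c s. r\<in>a}. \<Sum>u\<in>policies (S c) (A c). if u s = a then \<mu>$(c,s,u) else 0)
      = (\<Sum>u\<in>policies (S c) (A c). \<Sum>a\<in>{a\<in>A c s. r\<in>a}. if u s = a then \<mu>$(c,s,u) else 0)"
      by (rule sum.swap)
    also have "\<dots> = (\<Sum>u\<in>policies (S c) (A c). (if r\<in>u s then 1 else 0) * \<mu>$(c,s,u))"
      by (rule sum.cong[OF refl]) (use that in \<open>auto simp: policies_def sum.delta'\<close>)
    finally show ?thesis .
  qed
  then show ?thesis unfolding flow_def fl_def sa_dist_def by simp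
qed

lemma Fval_eq: "Fval lam S A \<phi> w \<mu> c u = (\<Sum>s\<in>S c. stat_dist lam (S c) (policy_kernel (\<phi> c) u) s
    * (\<Sum>r\<in>u s. w r (fl lam S A \<mu> r)))"
  unfolding Fval_def cg_reward_def flow_eq ..

lemma swap4:
  assumes "finite C" "\<And>c. finite (U c)" "\<And>c. finite (T c)" "finite R"
  shows "(\<Sum>c\<in>C. \<Sum>u\<in>U c. \<Sum>s\<in>T c. \<Sum>r\<in>R. g c u s r) = (\<Sum>r\<in>R. \<Sum>c\<in>C. \<Sum>s\<in>T c. \<Sum>u\<in>U c. g c u s r)"
proof -
  have "(\<Sum>u\<in>U c. \<Sum>s\<in>T c. \<Sum>r\<in>R. g c u s r) = (\<Sum>r\<in>R. \<Sum>s\<in>T c. \<Sum>u\<in>U c. g c u s r)" for c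
  proof -
    have "(\<Sum>u\<in>U c. \<Sum>s\<in>T c. \<Sum>r\<in>R. g c u s r) = (\<Sum>u\<in>U c. \<Sum>r\<in>R. \<Sum>s\<in>T c. g c u s r)"
      by (rule sum.cong[OF refl], rule sum.swap)
    also have "\<dots> = (\<Sum>r\<in>R. \<Sum>u\<in>U c. \<Sum>s\<in>T c. g c u s r)" by (rule sum.swap)
    also have "\<dots> = (\<Sum>r\<in>R. \<Sum>s\<in>T c. \<Sum>u\<in>U c. g c u s r)"
      by (rule sum.cong[OF refl], rule sum.swap)
    finally show ?thesis .
  qed
  then have "(\<Sum>c\<in>C. \<Sum>u\<in>U c. \<Sum>s\<in>T c. \<Sum>r\<in>R. g c u s r) = (\<Sum>c\<in>C. \<Sum>r\<in>R. \<Sum>s\<in>T c. \<Sum>u\<in>U c. g c u s r)"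
    by simp
  also have "\<dots> = (\<Sum>r\<in>R. \<Sum>c\<in>C. \<Sum>s\<in>T c. \<Sum>u\<in>U c. g c u s r)" by (rule sum.swap)
  finally show ?thesis .
qed

lemma G_eq:
  assumes "\<forall>c. \<forall>u\<in>policies (S c) (A c). \<forall>s\<in>S c. \<nu>$(c,s,u) =
      stat_dist lam (S c) (policy_kernel (\<phi> c) u) s * policy_mass S \<nu> c u"
  shows "lam * (\<Sum>c\<in>UNIV. \<Sum>u\<in>policies (S c) (A c). policy_mass S \<nu> c u * Fval lam S A \<phi> w \<mu> c u)
    = (\<Sum>r\<in>UNIV. w r (fl lam S A \<mu> r) * fl lam S A \<nu> r)"
proof -
  define W where "W r = w r (fl lam S A \<mu> r)" for r
  have 1: "policy_mass S \<nu> c u * Fval lam S A \<phi> w \<mu> c u =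
     (\<Sum>s\<in>S c. \<Sum>r\<in>UNIV. W r * ((if r\<in>u s then 1 else 0) * \<nu>$(c,s,u)))"
    if u: "u\<in>policies (S c) (A c)" for c u
  proof -
    have "policy_mass S \<nu> c u * Fval lam S A \<phi> w \<mu> c u =
       (\<Sum>s\<in>S c. (stat_dist lam (S c) (policy_kernel (\<phi> c) u) s * policy_mass S \<nu> c u) * (\<Sum>r\<in>u s. W r))"
      unfolding Fval_eq sum_distrib_left W_def by (rule sum.cong) (simp_all add: ac_simps)
    also have "\<dots> = (\<Sum>s\<in>S c. \<nu>$(c,s,u) * (\<Sum>r\<in>u s. W r))"
      using assms u by simp
    also have "\<dots> = (\<Sum>s\<in>S c. \<Sum>r\<in>UNIV. W r * ((if r\<in>u s then 1 else 0) * \<nu>$(c,s,u)))"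
    proof (rule sum.cong[OF refl])
      fix s
      have "(\<Sum>r\<in>UNIV. W r * ((if r\<in>u s then 1 else 0) * \<nu>$(c,s,u)))
          = (\<Sum>r\<in>UNIV. if r \<in> u s then \<nu>$(c,s,u) * W r else 0)"
        by (rule sum.cong) auto
      also have "\<dots> = (\<Sum>r\<in>u s. \<nu>$(c,s,u) * W r)"
        by (simp add: sum.If_cases)
      finally show "\<nu>$(c,s,u) * (\<Sum>r\<in>u s. W r) = (\<Sum>r\<in>UNIV. W r * ((if r\<in>u s then 1 else 0) * \<nu>$(c,s,u)))"
        by (simp add: sum_distrib_left)
    qed
    finally show ?thesis .
  qed
  have "lam * (\<Sum>c\<in>UNIV. \<Sum>u\<in>policies (S c) (A c). policy_mass S \<nu> c u * Fval lam S A \<phi> w \<mu> c u)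
     = lam * (\<Sum>c\<in>UNIV. \<Sum>u\<in>policies (S c) (A c). \<Sum>s\<in>S c. \<Sum>r\<in>UNIV. W r * ((if r\<in>u s then 1 else 0) * \<nu>$(c,s,u)))"
    using 1 by simp
  also have "\<dots> = lam * (\<Sum>r\<in>UNIV. \<Sum>c\<in>UNIV. \<Sum>s\<in>S c. \<Sum>u\<in>policies (S c) (A c). W r * ((if r\<in>u s then 1 else 0) * \<nu>$(c,s,u)))"
    by (subst swap4) auto
  also have "\<dots> = (\<Sum>r\<in>UNIV. W r * fl lam S A \<nu> r)"
    unfolding fl_def sum_distrib_left[symmetric] by (simp add: sum_distrib_left ac_simps)
  finally show ?thesis unfolding W_def .
qed

lemma X_nonneg: "\<mu> \<in> state_policy_dists S A m \<Longrightarrow> s \<in> S c \<Longrightarrow> u \<in> policies (S c) (A c) \<Longrightarrow> \<mu>$(c,s,u) \<ge> 0"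
  unfolding state_policy_dists_def valid_idx_def by auto

lemma fl_nonneg: "lam > 0 \<Longrightarrow> \<mu> \<in> state_policy_dists S A m \<Longrightarrow> fl lam S A \<mu> r \<ge> 0"
  unfolding fl_def
  by (intro mult_nonneg_nonneg sum_nonneg) (auto dest: X_nonneg)

lemma pm_nonneg: "\<mu> \<in> state_policy_dists S A m \<Longrightarrow> u \<in> policies (S c) (A c) \<Longrightarrow> policy_mass S \<mu> c u \<ge> 0"
  unfolding policy_mass_def by (intro sum_nonneg) (auto dest: X_nonneg)

lemma pm_sum: "\<mu> \<in> state_policy_dists S A m \<Longrightarrow> (\<Sum>u\<in>policies (S c) (A c). policy_mass S \<mu> c u) = m c"
  unfolding policy_mass_def state_policy_dists_def by (subst sum.swap) auto

lemma nash_class: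
  assumes mu: "MSNE lam S A \<phi> m w \<mu>" and nu: "\<nu> \<in> state_policy_dists S A m" and mc: "m c > 0"
  shows "(\<Sum>u\<in>policies (S c) (A c). policy_mass S \<nu> c u * Fval lam S A \<phi> w \<mu> c u)
       \<le> (\<Sum>u\<in>policies (S c) (A c). policy_mass S \<mu> c u * Fval lam S A \<phi> w \<mu> c u)"
proof -
  let ?P = "policies (S c) (A c)"
  let ?F = "Fval lam S A \<phi> w \<mu> c"
  have muX: "\<mu> \<in> state_policy_dists S A m" using mu unfolding MSNE_def by auto
  have nash: "\<And>u v. u \<in> ?P \<Longrightarrow> policy_mass S \<mu> c u > 0 \<Longrightarrow> v \<in> ?P \<Longrightarrow> ?F v \<le> ?F u"
    using mu unfolding MSNE_def by blast
  obtain u0 where u0: "u0 \<in> ?P" "policy_mass S \<mu> c u0 > 0"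
  proof (rule ccontr)
    assume "\<not> thesis"
    then have "\<forall>u\<in>?P. policy_mass S \<mu> c u \<le> 0" using that by force
    then have "(\<Sum>u\<in>?P. policy_mass S \<mu> c u) \<le> 0" by (intro sum_nonpos) auto
    then show False using pm_sum[OF muX, of c] mc by simp
  qed
  have le: "?F v \<le> ?F u0" if "v \<in> ?P" for v using nash[OF u0 that] .
  have eq: "policy_mass S \<mu> c u * ?F u = policy_mass S \<mu> c u * ?F u0" if "u \<in> ?P" for u
  proof (cases "policy_mass S \<mu> c u > 0")
    case True
    then have "?F u0 \<le> ?F u" using nash[OF that True u0(1)] by simp
    with le[OF that] show ?thesis by simp
  next
    case False
    then have "policy_mass S \<mu> c u = 0" using pm_nonneg[OF muX that] by simp
    then show ?thesis by simp
  qed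
  have "(\<Sum>u\<in>?P. policy_mass S \<nu> c u * ?F u) \<le> (\<Sum>u\<in>?P. policy_mass S \<nu> c u * ?F u0)"
    by (intro sum_mono mult_left_mono le pm_nonneg[OF nu])
  also have "\<dots> = m c * ?F u0" by (simp add: sum_distrib_right[symmetric] pm_sum[OF nu])
  also have "\<dots> = (\<Sum>u\<in>?P. policy_mass S \<mu> c u * ?F u0)" by (simp add: sum_distrib_right[symmetric] pm_sum[OF muX])
  also have "\<dots> = (\<Sum>u\<in>?P. policy_mass S \<mu> c u * ?F u)" by (rule sum.cong[OF refl], rule eq[symmetric])
  finally show ?thesis .
qed

lemma key:
  assumes lam: "lam > 0" and mpos: "\<forall>c. m c > 0"
    and mono: "\<forall>r x y. 0 \<le> x \<longrightarrow> x \<le> y \<longrightarrow> w r y \<le> w r x"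
    and mu: "MSNE lam S A \<phi> m w \<mu>" and nu: "MSNE lam S A \<phi> m w \<nu>"
  shows "(w r (fl lam S A \<mu> r) - w r (fl lam S A \<nu> r)) * (fl lam S A \<nu> r - fl lam S A \<mu> r) = 0"
proof -
  have muX: "\<mu> \<in> state_policy_dists S A m" using mu unfolding MSNE_def by auto
  have nuX: "\<nu> \<in> state_policy_dists S A m" using nu unfolding MSNE_def by auto
  have stmu: "\<forall>c. \<forall>u\<in>policies (S c) (A c). \<forall>s\<in>S c. \<mu>$(c,s,u) =
      stat_dist lam (S c) (policy_kernel (\<phi> c) u) s * policy_mass S \<mu> c u"
    using mu unfolding MSNE_def by blast
  have stnu: "\<forall>c. \<forall>u\<in>policies (S c) (A c). \<forall>s\<in>S c. \<nu>$(c,s,u) =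
      stat_dist lam (S c) (policy_kernel (\<phi> c) u) s * policy_mass S \<nu> c u"
    using nu unfolding MSNE_def by blast
  define a where "a r = fl lam S A \<mu> r" for r
  define b where "b r = fl lam S A \<nu> r" for r
  have g1: "(\<Sum>c\<in>UNIV. \<Sum>u\<in>policies (S c) (A c). policy_mass S \<nu> c u * Fval lam S A \<phi> w \<mu> c u)
      \<le> (\<Sum>c\<in>UNIV. \<Sum>u\<in>policies (S c) (A c). policy_mass S \<mu> c u * Fval lam S A \<phi> w \<mu> c u)"
    by (intro sum_mono nash_class[OF mu nuX] mpos[rule_format])
  have g2: "(\<Sum>c\<in>UNIV. \<Sum>u\<in>policies (S c) (A c). policy_mass S \<mu> c u * Fval lam S A \<phi> w \<nu> c u)
      \<le> (\<Sum>c\<in>UNIV. \<Sum>u\<in>policies (S c) (A c). policy_mass S \<nu> c u * Fval lam S A \<phi> w \<nu> c u)"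
    by (intro sum_mono nash_class[OF nu muX] mpos[rule_format])
  have h1: "(\<Sum>r\<in>UNIV. w r (a r) * b r) \<le> (\<Sum>r\<in>UNIV. w r (a r) * a r)"
    using mult_left_mono[OF g1 less_imp_le[OF lam]] unfolding G_eq[OF stnu] G_eq[OF stmu] a_def b_def .
  have h2: "(\<Sum>r\<in>UNIV. w r (b r) * a r) \<le> (\<Sum>r\<in>UNIV. w r (b r) * b r)"
    using mult_left_mono[OF g2 less_imp_le[OF lam]] unfolding G_eq[OF stnu] G_eq[OF stmu] a_def b_def .
  have "(\<Sum>r\<in>UNIV. (w r (a r) - w r (b r)) * (b r - a r)) =
     (\<Sum>r\<in>UNIV. w r (a r) * b r) - (\<Sum>r\<in>UNIV. w r (a r) * a r) + ((\<Sum>r\<in>UNIV. w r (b r) * a r) - (\<Sum>r\<in>UNIV. w r (b r) * b r))"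
    by (simp add: sum_subtractf sum.distrib[symmetric] algebra_simps)
  also have "\<dots> \<le> 0" using h1 h2 by simp
  finally have le0: "(\<Sum>r\<in>UNIV. (w r (a r) - w r (b r)) * (b r - a r)) \<le> 0" .
  have nn: "(w r (a r) - w r (b r)) * (b r - a r) \<ge> 0" for r
  proof (cases "a r \<le> b r")
    case True
    have "w r (b r) \<le> w r (a r)" using mono True fl_nonneg[OF lam muX] a_def by auto
    then show ?thesis using True by simp
  next
    case False
    have "w r (a r) \<le> w r (b r)" using mono False fl_nonneg[OF lam nuX] b_def by auto
    then show ?thesis using False by (simp add: mult_nonpos_nonpos)
  qed
  have "(\<Sum>r\<in>UNIV. (w r (a r) - w r (b r)) * (b r - a r)) = 0"
    using le0 sum_nonneg[of UNIV "\<lambda>r. (w r (a r) - w r (b r)) * (b r - a r)", OF nn] by linarith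
  then have "\<forall>r\<in>UNIV. (w r (a r) - w r (b r)) * (b r - a r) = 0"
    by (subst sum_nonneg_eq_0_iff[symmetric]) (use nn in auto)
  then show ?thesis unfolding a_def b_def by simp
qed

lemma convex_msne:
  fixes S :: "'c::finite \<Rightarrow> 'st::finite set" and A :: "'c \<Rightarrow> 'st \<Rightarrow> 'r::finite set set"
  assumes lam: "lam > 0" and mpos: "\<forall>c. m c > 0"
    and mono: "\<forall>r x y. 0 \<le> x \<longrightarrow> x \<le> y \<longrightarrow> w r y \<le> w r x"
  shows "convex {\<mu>. MSNE lam S A \<phi> m w \<mu>}"
proof (rule convexI)
  fix x y :: "real ^ ('c \<times> 'st \<times> ('st \<Rightarrow> 'r set))" and p q :: real
  assume xm: "x \<in> {\<mu>. MSNE lam S A \<phi> m w \<mu>}" and ym: "y \<in> {\<mu>. MSNE lam S A \<phi> m w \<mu>}"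
    and p: "0 \<le> p" and q: "0 \<le> q" and pq: "p + q = 1"
  have mx: "MSNE lam S A \<phi> m w x" and my: "MSNE lam S A \<phi> m w y" using xm ym by auto
  have xX: "x \<in> state_policy_dists S A m" using mx unfolding MSNE_def by auto
  have yX: "y \<in> state_policy_dists S A m" using my unfolding MSNE_def by auto
  define z where "z = p *\<^sub>R x + q *\<^sub>R y"
  have comp: "z $ i = p * x $ i + q * y $ i" for i unfolding z_def by simp
  have p1: "p = 1 - q" using pq by simp
  have flz: "fl lam S A z r = p * fl lam S A x r + q * fl lam S A y r" for r
    unfolding fl_def comp by (simp add: sum.distrib sum_distrib_left algebra_simps)
  have pmz: "policy_mass S z c u = p * policy_mass S x c u + q * policy_mass S y c u" for c u
    unfolding policy_mass_def comp by (simp add: sum.distrib sum_distrib_left)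
  have Wz: "w r (fl lam S A z r) = w r (fl lam S A x r) \<and> w r (fl lam S A y r) = w r (fl lam S A x r)" for r
  proof -
    define a where "a = fl lam S A x r"
    define b where "b = fl lam S A y r"
    have k: "(w r a - w r b) * (b - a) = 0" unfolding a_def b_def by (rule key[OF lam mpos mono mx my])
    have za: "fl lam S A z r - a = q * (b - a)" unfolding flz a_def b_def p1 by (simp add: algebra_simps)
    have zb: "b - fl lam S A z r = p * (b - a)" unfolding flz a_def b_def p1 by (simp add: algebra_simps)
    have a0: "a \<ge> 0" unfolding a_def by (rule fl_nonneg[OF lam xX])
    have b0: "b \<ge> 0" unfolding b_def by (rule fl_nonneg[OF lam yX])
    show ?thesis
    proof (cases "a = b")
      case True
      then have "fl lam S A z r = a" using za by simp
      then show ?thesis using True unfolding a_def b_def by simp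
    next
      case False
      then have wab: "w r a = w r b" using k by simp
      show ?thesis
      proof (cases "a \<le> b")
        case True
        have "0 \<le> q * (b - a)" "0 \<le> p * (b - a)" using p q True by simp_all
        then have "a \<le> fl lam S A z r" "fl lam S A z r \<le> b" using za zb by linarith+
        then have "w r (fl lam S A z r) \<le> w r a" "w r b \<le> w r (fl lam S A z r)"
          using mono a0 by (meson order_trans)+
        then show ?thesis using wab unfolding a_def b_def by simp
      next
        case False
        have "0 \<le> q * (a - b)" "0 \<le> p * (a - b)" using p q False by simp_all
        then have "b \<le> fl lam S A z r" "fl lam S A z r \<le> a" using za zb by (simp_all add: algebra_simps)
        then have "w r (fl lam S A z r) \<le> w r b" "w r a \<le> w r (fl lam S A z r)"
          using mono b0 by (meson order_trans)+
        then show ?thesis using wab unfolding a_def b_def by simp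
      qed
    qed
  qed
  have Fz: "Fval lam S A \<phi> w z c u = Fval lam S A \<phi> w x c u" "Fval lam S A \<phi> w y c u = Fval lam S A \<phi> w x c u" for c u
    by (simp_all add: Fval_eq Wz)
  have mm: "p * m c + q * m c = m c" for c using pq by (simp add: distrib_right[symmetric])
  have zX: "z \<in> state_policy_dists S A m"
  proof -
    have "(\<Sum>s\<in>S c. \<Sum>u\<in>policies (S c) (A c). z $ (c, s, u)) =
      p * (\<Sum>s\<in>S c. \<Sum>u\<in>policies (S c) (A c). x $ (c, s, u)) +
      q * (\<Sum>s\<in>S c. \<Sum>u\<in>policies (S c) (A c). y $ (c, s, u))" for c
      by (simp add: comp sum.distrib sum_distrib_left)
    then show ?thesis
      using xX yX p q unfolding state_policy_dists_def by (auto simp: comp mm)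
  qed
  have "MSNE lam S A \<phi> m w z"
    unfolding MSNE_def
  proof (intro conjI zX allI ballI impI)
    fix c u v assume u: "u \<in> policies (S c) (A c)" and pos: "0 < policy_mass S z c u"
      and v: "v \<in> policies (S c) (A c)"
    have "0 < policy_mass S x c u \<or> 0 < policy_mass S y c u"
    proof (rule ccontr)
      assume "\<not> ?thesis"
      then have "policy_mass S x c u = 0" "policy_mass S y c u = 0"
        using pm_nonneg[OF xX u] pm_nonneg[OF yX u] by auto
      then show False using pos pmz by simp
    qed
    then show "Fval lam S A \<phi> w z c v \<le> Fval lam S A \<phi> w z c u"
      using mx my u v unfolding MSNE_def Fz by (metis Fz(2))
  next
    fix c u s assume u: "u \<in> policies (S c) (A c)" and s: "s \<in> S c"
    have "x $ (c,s,u) = stat_dist lam (S c) (policy_kernel (\<phi> c) u) s * policy_mass S x c u"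
      "y $ (c,s,u) = stat_dist lam (S c) (policy_kernel (\<phi> c) u) s * policy_mass S y c u"
      using mx my u s unfolding MSNE_def by blast+
    then show "z $ (c, s, u) = stat_dist lam (S c) (policy_kernel (\<phi> c) u) s * policy_mass S z c u"
      unfolding comp pmz by (simp add: algebra_simps)
  qed
  then show "p *\<^sub>R x + q *\<^sub>R y \<in> {\<mu>. MSNE lam S A \<phi> m w \<mu>}" unfolding z_def by simp
qed

definition Ft :: "real \<Rightarrow> ('c::finite \<Rightarrow> 'st::finite set) \<Rightarrow> ('c \<Rightarrow> 'st \<Rightarrow> 'r::finite set set)
    \<Rightarrow> ('c \<Rightarrow> 'st \<Rightarrow> 'r set \<Rightarrow> 'st \<Rightarrow> real) \<Rightarrow> ('r \<Rightarrow> real \<Rightarrow> real)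
    \<Rightarrow> real ^ ('c \<times> 'st \<times> ('st \<Rightarrow> 'r set)) \<Rightarrow> 'c \<Rightarrow> ('st \<Rightarrow> 'r set) \<Rightarrow> real" where
  "Ft lam S A \<phi> w \<mu> c u = (\<Sum>s\<in>S c. stat_dist lam (S c) (policy_kernel (\<phi> c) u) s
    * (\<Sum>r\<in>u s. w r (max 0 (fl lam S A \<mu> r))))"

lemma Ft_eq: "lam > 0 \<Longrightarrow> \<mu> \<in> state_policy_dists S A m \<Longrightarrow> Fval lam S A \<phi> w \<mu> c u = Ft lam S A \<phi> w \<mu> c u"
  unfolding Fval_eq Ft_def using fl_nonneg[of lam \<mu>] by (simp add: max_absorb2)

lemma cont_fl: "continuous_on UNIV (\<lambda>\<mu>. fl lam S A \<mu> r)"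
  unfolding fl_def by (intro continuous_intros)

lemma cont_pm: "continuous_on UNIV (\<lambda>\<mu>. policy_mass S \<mu> c u)"
  unfolding policy_mass_def by (intro continuous_intros)

lemma cont_Ft:
  assumes wc: "\<forall>r. continuous_on {0..} (w r)"
  shows "continuous_on UNIV (\<lambda>\<mu>. Ft lam S A \<phi> w \<mu> c u)"
proof -
  have cw: "continuous_on UNIV (\<lambda>\<mu>. w r (max 0 (fl lam S A \<mu> r)))" for r
    by (rule continuous_on_compose2[OF wc[rule_format]]) (auto intro!: continuous_intros cont_fl)
  show ?thesis unfolding Ft_def by (intro continuous_intros cw)
qed

lemma closed_X: "closed (state_policy_dists S A m)"
  unfolding state_policy_dists_def
  by (intro closed_Collect_conj closed_Collect_all closed_Collect_imp open_Collect_const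
      closed_Collect_eq closed_Collect_le continuous_intros)

lemma bounded_X:
  fixes S :: "'c::finite \<Rightarrow> 'st::finite set" and A :: "'c \<Rightarrow> 'st \<Rightarrow> 'r::finite set set"
  assumes mpos: "\<forall>c. m c > 0"
  shows "bounded (state_policy_dists S A m)"
proof -
  define B where "B = (\<Sum>c\<in>UNIV. m c)"
  have comp: "\<bar>\<mu> $ i\<bar> \<le> B" if mu: "\<mu> \<in> state_policy_dists S A m" for \<mu> i
  proof (cases "valid_idx S A i")
    case False
    then have "\<mu> $ i = 0" using mu unfolding state_policy_dists_def by (cases i) auto
    moreover have "0 \<le> B" unfolding B_def using mpos by (intro sum_nonneg) (simp add: less_imp_le)
    ultimately show ?thesis by simp
  next
    case True
    obtain c s u where i: "i = (c, s, u)" by (cases i) auto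
    have s: "s \<in> S c" and u: "u \<in> policies (S c) (A c)" using True i unfolding valid_idx_def by auto
    have nn: "0 \<le> \<mu> $ (c, s, u)" using X_nonneg[OF mu s u] .
    have "\<mu> $ (c, s, u) \<le> (\<Sum>u'\<in>policies (S c) (A c). \<mu> $ (c, s, u'))"
      by (rule member_le_sum[OF u]) (auto intro: X_nonneg[OF mu s])
    also have "\<dots> \<le> (\<Sum>s'\<in>S c. \<Sum>u'\<in>policies (S c) (A c). \<mu> $ (c, s', u'))"
      by (rule member_le_sum[OF s, where f="\<lambda>s'. \<Sum>u'\<in>policies (S c) (A c). \<mu> $ (c, s', u')"])
         (auto intro!: sum_nonneg intro: X_nonneg[OF mu])
    also have "\<dots> = m c" using mu unfolding state_policy_dists_def by auto
    also have "\<dots> \<le> B" unfolding B_def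
      by (rule member_le_sum) (use mpos in \<open>auto simp: less_imp_le\<close>)
    finally show ?thesis using nn i by simp
  qed
  have "norm \<mu> \<le> of_nat CARD('c \<times> 'st \<times> ('st \<Rightarrow> 'r set)) * B" if "\<mu> \<in> state_policy_dists S A m" for \<mu>
  proof -
    have "norm \<mu> \<le> (\<Sum>i\<in>UNIV. \<bar>\<mu> $ i\<bar>)" by (rule norm_le_l1_cart)
    also have "\<dots> \<le> (\<Sum>i\<in>(UNIV :: ('c \<times> 'st \<times> ('st \<Rightarrow> 'r set)) set). B)" by (intro sum_mono comp that)
    finally show ?thesis by simp
  qed
  then show ?thesis unfolding Elementary_Metric_Spaces.bounded_iff by blast
qed

lemma compact_msne:
  fixes S :: "'c::finite \<Rightarrow> 'st::finite set" and A :: "'c \<Rightarrow> 'st \<Rightarrow> 'r::finite set set"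
  assumes lam: "lam > 0" and mpos: "\<forall>c. m c > 0" and wc: "\<forall>r. continuous_on {0..} (w r)"
  shows "compact {\<mu>. MSNE lam S A \<phi> m w \<mu>}"
proof -
  have eq: "{\<mu>. MSNE lam S A \<phi> m w \<mu>} = state_policy_dists S A m \<inter>
    {\<mu>. \<forall>c. \<forall>u. u \<in> policies (S c) (A c) \<longrightarrow>
        ((0 < policy_mass S \<mu> c u \<longrightarrow> (\<forall>v. v \<in> policies (S c) (A c) \<longrightarrow>
             Ft lam S A \<phi> w \<mu> c v \<le> Ft lam S A \<phi> w \<mu> c u)) \<and>
         (\<forall>s. s \<in> S c \<longrightarrow> \<mu> $ (c, s, u) = stat_dist lam (S c) (policy_kernel (\<phi> c) u) s * policy_mass S \<mu> c u))}"
    unfolding MSNE_def by (auto simp: Ft_eq[OF lam])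
  have cl: "closed {\<mu>. \<forall>c. \<forall>u. u \<in> policies (S c) (A c) \<longrightarrow>
        ((0 < policy_mass S \<mu> c u \<longrightarrow> (\<forall>v. v \<in> policies (S c) (A c) \<longrightarrow>
             Ft lam S A \<phi> w \<mu> c v \<le> Ft lam S A \<phi> w \<mu> c u)) \<and>
         (\<forall>s. s \<in> S c \<longrightarrow> \<mu> $ (c, s, u) = stat_dist lam (S c) (policy_kernel (\<phi> c) u) s * policy_mass S \<mu> c u))}"
    by (intro closed_Collect_conj closed_Collect_all closed_Collect_imp open_Collect_const
      closed_Collect_eq closed_Collect_le open_Collect_less cont_Ft[OF wc] cont_pm continuous_intros)
  have "bounded {\<mu>. MSNE lam S A \<phi> m w \<mu>}"
    by (rule bounded_subset[OF bounded_X[OF mpos]]) (auto simp: MSNE_def)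
  moreover have "closed {\<mu>. MSNE lam S A \<phi> m w \<mu>}"
    unfolding eq by (intro closed_Int closed_X cl)
  ultimately show ?thesis by (simp add: compact_eq_bounded_closed)
qed

theorem corollary1:
  fixes lam :: real
    and S :: "'c::finite \<Rightarrow> 'st::finite set"
    and A :: "'c \<Rightarrow> 'st \<Rightarrow> 'r::finite set set"
    and \<phi> :: "'c \<Rightarrow> 'st \<Rightarrow> 'r set \<Rightarrow> 'st \<Rightarrow> real"
    and m :: "'c \<Rightarrow> real"
    and w :: "'r \<Rightarrow> real \<Rightarrow> real"
  assumes lam_pos: "lam > 0"
    and mass_pos: "\<forall>c. m c > 0"
    and actions_nonempty: "\<forall>c. \<forall>s\<in>S c. A c s \<noteq> {}"
    and kernel_nonneg: "\<forall>c. \<forall>s\<in>S c. \<forall>a\<in>A c s. \<forall>s'\<in>S c. \<phi> c s a s' \<ge> 0"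
    and kernel_sum: "\<forall>c. \<forall>s\<in>S c. \<forall>a\<in>A c s. (\<Sum>s'\<in>S c. \<phi> c s a s') = 1"
    and A2: "\<forall>c. \<forall>u\<in>policies (S c) (A c). one_recurrent_class (S c) (policy_kernel (\<phi> c) u)"
    and w_C1: "\<forall>r. \<exists>w'. continuous_on {0..} w' \<and>
                 (\<forall>x\<ge>0. (w r has_real_derivative w' x) (at x within {0..}))"
    and w_nonincr: "\<forall>r x y. 0 \<le> x \<longrightarrow> x \<le> y \<longrightarrow> w r y \<le> w r x"
  shows "compact {\<mu>. MSNE lam S A \<phi> m w \<mu>} \<and> convex {\<mu>. MSNE lam S A \<phi> m w \<mu>} \<and>
         ((\<forall>r x y. 0 \<le> x \<longrightarrow> x < y \<longrightarrow> w r y < w r x) \<longrightarrow>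
          (\<forall>\<mu> \<nu>. MSNE lam S A \<phi> m w \<mu> \<longrightarrow> MSNE lam S A \<phi> m w \<nu> \<longrightarrow>
             (\<forall>r. flow lam S A (sa_dist S A \<mu>) r = flow lam S A (sa_dist S A \<nu>) r)))"
proof (intro conjI impI allI)
  have wc: "\<forall>r. continuous_on {0..} (w r)"
  proof
    fix r
    obtain w' where d: "\<forall>x\<ge>0. (w r has_real_derivative w' x) (at x within {0..})"
      using w_C1 by blast
    show "continuous_on {0..} (w r)"
      unfolding continuous_on_eq_continuous_within
    proof
      fix x :: real assume "x \<in> {0..}"
      then have "0 \<le> x" by simp
      then show "continuous (at x within {0..}) (w r)" using d DERIV_continuous by blast
    qed
  qed
  show "compact {\<mu>. MSNE lam S A \<phi> m w \<mu>}" by (rule compact_msne[OF lam_pos mass_pos wc])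
  show "convex {\<mu>. MSNE lam S A \<phi> m w \<mu>}" by (rule convex_msne[OF lam_pos mass_pos w_nonincr])
next
  fix \<mu> \<nu> r
  assume strict: "\<forall>r x y. 0 \<le> x \<longrightarrow> x < y \<longrightarrow> w r y < w r x"
    and mu: "MSNE lam S A \<phi> m w \<mu>" and nu: "MSNE lam S A \<phi> m w \<nu>"
  have muX: "\<mu> \<in> state_policy_dists S A m" using mu unfolding MSNE_def by auto
  have nuX: "\<nu> \<in> state_policy_dists S A m" using nu unfolding MSNE_def by auto
  define a where "a = fl lam S A \<mu> r"
  define b where "b = fl lam S A \<nu> r"
  have k: "(w r a - w r b) * (b - a) = 0" unfolding a_def b_def by (rule key[OF lam_pos mass_pos w_nonincr mu nu])
  have a0: "a \<ge> 0" unfolding a_def by (rule fl_nonneg[OF lam_pos muX])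
  have b0: "b \<ge> 0" unfolding b_def by (rule fl_nonneg[OF lam_pos nuX])
  have "a = b"
  proof (rule ccontr)
    assume ne: "a \<noteq> b"
    then have "w r a \<noteq> w r b"
    proof (cases "a < b")
      case True then have "w r b < w r a" using strict a0 by blast
      then show ?thesis by simp
    next
      case False then have "b < a" using ne by simp
      then have "w r a < w r b" using strict b0 by blast
      then show ?thesis by simp
    qed
    then show False using k ne by simp
  qed
  then show "flow lam S A (sa_dist S A \<mu>) r = flow lam S A (sa_dist S A \<nu>) r"
    unfolding flow_eq a_def b_def .
qed

end
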